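(* Let $\delta$ be a deco polyomino of height $n$ which is a parallelogram polyomino, and let $\pi=\Phi_4^{-1}(\delta)\in S_n$. Then the number of cells in the first (leftmost) column of $\delta$ equals the length of the last ascending run of $\pi$.
   Context: Cells are unit squares $[i,i+1]\times[j,j+1]$ with integer $i,j$; a polyomino is a finite edge-connected set of cells, up to translation. A directed polyomino has a distinguished cell (the source) such that every cell can be reached from the source by a path of cells moving only North or East inside the polyomino. It is column-convex if each column is connected. The (directed) height is the number of distinct diagonal lines $x+y=\text{const}$ passing through centers of its cells. A deco polyomino is a directed column-convex polyomino whose height is attained only in its last (rightmost) column. Every deco polyomino of height $n$ is built uniquely by $n$ steps from the empty polyomino; at step $j$ one performs either an elevation (add a cell at the bottom of the leftmost column; step 1 is always an elevation) or a column pasting (add a new column of $k$ cells, $1\le k\le j-1$, to the left of the current polyomino so that the bottoms of the first two columns lie at the same level). The bijection $\Phi_4^{-1}$ from deco polyominoes of height $n$ to $S_n$ is defined recursively: the height-1 polyomino maps to the permutation $1$; if $\delta\in D_n$ arises from $\delta'\in D_{n-1}$ and $\Phi_4^{-1}(\delta')=\pi_1\cdots\pi_{n-1}$, then $\Phi_4^{-1}(\delta)=\pi_1\cdots\pi_{n-1}\,n$ if the last step is an elevation, and $\Phi_4^{-1}(\delta)=\pi_1\cdots\pi_{n-1-k}\,n\,\pi_{n-k}\cdots\pi_{n-1}$ if the last step pastes a column of length $k$ (so that exactly $k$ entries follow $n$). An ascending run of a permutation is a maximal increasing block of consecutive entries. A parallelogram polyomino is a polyomino bounded by two lattice paths with steps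 $(1,0)$ and $(0,1)$ which intersect only at their common origin and common endpoint. *)

theory Defs
  imports Main
begin

(* Cells are identified by their lower-left corner (i,j) :: int \<times> int. *)
type_synonym cell = "int \<times> int"

datatype deco_step = Elev | Paste nat

(* Valid construction sequence: step j (1-indexed, list index j-1) is either an
   elevation or pastes a column of k cells with 1 \<le> k \<le> j-1; step 1 is an elevation. *)
definition valid_steps :: "deco_step list \<Rightarrow> bool" where
  "valid_steps s \<longleftrightarrow> s \<noteq> [] \<and> hd s = Elev \<and>
     (\<forall>j < length s. \<forall>k. s ! j = Paste k \<longrightarrow> 1 \<le> k \<and> k \<le> j)"

(* Geometric construction, processing the REVERSED step list (last step first).
   Normalisation: the leftmost column is at x = 0 and its bottom cell at y = 0. *)
fun build_rev :: "deco_step list \<Rightarrow> cell set" where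
  "build_rev [] = {}"
| "build_rev (Elev # rs) =
     insert (0, 0) ((\<lambda>(x, y). (x, y + 1)) ` build_rev rs)"
| "build_rev (Paste k # rs) =
     {(0, int y) | y. y < k} \<union> ((\<lambda>(x, y). (x + 1, y)) ` build_rev rs)"

definition deco_poly :: "deco_step list \<Rightarrow> cell set" where
  "deco_poly s = build_rev (rev s)"

fun phi_rev :: "deco_step list \<Rightarrow> nat list" where
  "phi_rev [] = []"
| "phi_rev (Elev # rs) = phi_rev rs @ [Suc (length rs)]"
| "phi_rev (Paste k # rs) =
     (let p = phi_rev rs; m = length rs
      in take (m - k) p @ [Suc m] @ drop (m - k) p)"

definition Phi4_inv :: "deco_step list \<Rightarrow> nat list" where
  "Phi4_inv s = phi_rev (rev s)"

(* Parallelogram polyomino, described column by column: the region between two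
   N/E lattice paths meeting only at their endpoints consists of w \<ge> 1 consecutive
   columns, column i being the cells with b i \<le> y \<le> t i, where the bottoms b and
   tops t are weakly increasing and consecutive columns share an edge
   (b (i+1) \<le> t i), which is exactly the condition that the two paths do not meet
   except at the endpoints. *)
definition parallelogram_polyomino :: "cell set \<Rightarrow> bool" where
  "parallelogram_polyomino P \<longleftrightarrow>
     (\<exists>(x0::int) (w::nat) (b::nat \<Rightarrow> int) (t::nat \<Rightarrow> int).
        1 \<le> w \<and>
        P = {(x0 + int i, y) | i y. i < w \<and> b i \<le> y \<and> y \<le> t i} \<and>
        (\<forall>i < w. b i \<le> t i) \<and>
        (\<forall>i. i + 1 < w \<longrightarrow> b i \<le> b (i + 1) \<and> t i \<le> t (i + 1) \<and> b (i + 1) \<le> t i))"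

definition first_column_size :: "cell set \<Rightarrow> nat" where
  "first_column_size P = card {c \<in> P. fst c = Min (fst ` P)}"

definition last_ascending_run_length :: "nat list \<Rightarrow> nat" where
  "last_ascending_run_length xs =
     (GREATEST k. k \<le> length xs \<and> sorted_wrt (<) (drop (length xs - k) xs))"

end

theory Submission
  imports Defs
begin

fun colsize :: "deco_step list \<Rightarrow> nat" where
  "colsize [] = 0"
| "colsize (Elev # rs) = Suc (colsize rs)"
| "colsize (Paste k # rs) = k"

fun vr :: "deco_step list \<Rightarrow> bool" where
  "vr [] = True"
| "vr (Elev # rs) = vr rs"
| "vr (Paste k # rs) = (1 \<le> k \<and> k \<le> length rs \<and> vr rs)"

fun good :: "deco_step list \<Rightarrow> bool" where
  "good [] = True"
| "good (Elev # rs) = good rs"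
| "good (Paste k # rs) = (k \<le> colsize rs \<and> good rs)"

definition Qp :: "cell set \<Rightarrow> bool" where
  "Qp P \<longleftrightarrow> (\<forall>x y z. (x,y) \<in> P \<longrightarrow> (x+1,z) \<in> P \<longrightarrow> (\<exists>y'. y \<le> y' \<and> (x+1,y') \<in> P))"

lemma up_mem[simp]: "((a::int),(b::int)) \<in> (\<lambda>(x, y). (x, y + 1)) ` S \<longleftrightarrow> (a, b - 1) \<in> S"
  by (auto simp: image_iff) (metis case_prod_conv diff_add_cancel)
lemma right_mem[simp]: "((a::int),(b::int)) \<in> (\<lambda>(x, y). (x + 1, y)) ` S \<longleftrightarrow> (a - 1, b) \<in> S"
  by (auto simp: image_iff) (metis case_prod_conv diff_add_cancel)
lemma build_Elev: "(a,b) \<in> build_rev (Elev # rs) \<longleftrightarrow> (a,b) = (0,0) \<or> (a, b - 1) \<in> build_rev rs"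
  by simp
lemma build_Paste: "(a,b) \<in> build_rev (Paste k # rs) \<longleftrightarrow> (a = 0 \<and> 0 \<le> b \<and> b < int k) \<or> (a - 1, b) \<in> build_rev rs"
  apply simp
  by (metis nat_less_iff of_nat_less_iff of_nat_0_le_iff int_nat_eq)
declare build_rev.simps(2,3)[simp del]

lemma nonneg: "(x,y) \<in> build_rev r \<Longrightarrow> 0 \<le> x \<and> 0 \<le> y"
proof (induction r arbitrary: x y rule: build_rev.induct)
  case 1 then show ?case by simp
next
  case (2 rs) then show ?case unfolding build_Elev by fastforce
next
  case (3 k rs) then show ?case unfolding build_Paste by fastforce
qed

lemma col0: "(0,y) \<in> build_rev r \<longleftrightarrow> 0 \<le> y \<and> y < int (colsize r)"
proof (induction r arbitrary: y rule: build_rev.induct)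
  case 1 then show ?case by simp
next
  case (2 rs)
  show ?case unfolding build_Elev 2 by auto
next
  case (3 k rs)
  have "(-1, y) \<notin> build_rev rs" using nonneg by fastforce
  then show ?case unfolding build_Paste by simp
qed

lemma para_Q: "parallelogram_polyomino P \<Longrightarrow> Qp P"
  unfolding parallelogram_polyomino_def Qp_def
proof (elim exE conjE, intro allI impI)
  fix x0 w b t x y z
  assume P: "P = {(x0 + int i, y) | i y. i < w \<and> b i \<le> y \<and> y \<le> t i}"
    and bt: "\<forall>i < w. b i \<le> t i"
    and mono: "\<forall>i. i + 1 < w \<longrightarrow> b i \<le> b (i + 1) \<and> t i \<le> t (i + 1) \<and> b (i + 1) \<le> t i"
    and c1: "(x,y) \<in> P" and c2: "(x+1,z) \<in> P"
  from c1 P obtain i where i: "x = x0 + int i" "i < w" "b i \<le> y" "y \<le> t i" by auto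
  from c2 P obtain i' where i': "x + 1 = x0 + int i'" "i' < w" by auto
  have "i' = i + 1" using i i' by linarith
  then have m: "t i \<le> t (i+1)" "i + 1 < w" using mono i' by auto
  have "(x+1, t (i+1)) \<in> P" using P bt m i by force
  then show "\<exists>y'. y \<le> y' \<and> (x+1,y') \<in> P" using m i by (intro exI[of _ "t (i+1)"]) auto
qed

lemma colsize_pos: "vr r \<Longrightarrow> r \<noteq> [] \<Longrightarrow> 1 \<le> colsize r"
  by (cases r rule: colsize.cases) auto

lemma Q_good: "vr r \<Longrightarrow> Qp (build_rev r) \<Longrightarrow> good r"
proof (induction r rule: build_rev.induct)
  case 1 then show ?case by simp
next
  case (2 rs)
  have "Qp (build_rev rs)"
    unfolding Qp_def
  proof (intro allI impI)
    fix x y z assume a: "(x,y) \<in> build_rev rs" "(x+1,z) \<in> build_rev rs"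
    have x0: "0 \<le> x" using nonneg a by blast
    have "(x, y+1) \<in> build_rev (Elev # rs)" "(x+1, z+1) \<in> build_rev (Elev # rs)"
      unfolding build_Elev using a by simp_all
    with 2(3) obtain y' where y': "y + 1 \<le> y'" "(x+1, y') \<in> build_rev (Elev # rs)"
      unfolding Qp_def by blast
    have "(x+1, y'-1) \<in> build_rev rs" using y'(2) x0 unfolding build_Elev by simp
    then show "\<exists>y'. y \<le> y' \<and> (x+1,y') \<in> build_rev rs" using y'(1) by (intro exI[of _ "y'-1"]) simp
  qed
  then show ?case using 2 by simp
next
  case (3 k rs)
  have k: "1 \<le> k" "k \<le> length rs" "vr rs" using 3(2) by auto
  have "Qp (build_rev rs)"
    unfolding Qp_def
  proof (intro allI impI)
    fix x y z assume a: "(x,y) \<in> build_rev rs" "(x+1,z) \<in> build_rev rs"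
    have x0: "0 \<le> x" using nonneg a by blast
    have "(x+1, y) \<in> build_rev (Paste k # rs)" "(x+1+1, z) \<in> build_rev (Paste k # rs)"
      unfolding build_Paste using a by (simp_all add: add.commute)
    with 3(3) obtain y' where y': "y \<le> y'" "(x+1+1, y') \<in> build_rev (Paste k # rs)"
      unfolding Qp_def by blast
    have "(x+1, y') \<in> build_rev rs" using y'(2) x0 unfolding build_Paste by (simp add: add.commute)
    then show "\<exists>y'. y \<le> y' \<and> (x+1,y') \<in> build_rev rs" using y'(1) by blast
  qed
  moreover have "k \<le> colsize rs"
  proof -
    have rs: "rs \<noteq> []" using k by auto
    have "1 \<le> colsize rs" using colsize_pos[OF k(3) rs] .
    then have "(0,0) \<in> build_rev rs" using col0 by simp
    then have c2: "(0+1, 0) \<in> build_rev (Paste k # rs)" unfolding build_Paste by simp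
    have c1: "(0, int (k - 1)) \<in> build_rev (Paste k # rs)" using k unfolding build_Paste by simp
    from 3(3) c1 c2 obtain y' where y': "int (k-1) \<le> y'" "(0+1, y') \<in> build_rev (Paste k # rs)"
      unfolding Qp_def by blast
    then have "(0, y') \<in> build_rev rs" unfolding build_Paste by simp
    then have "y' < int (colsize rs)" using col0 by blast
    then show ?thesis using y' k by linarith
  qed
  ultimately show ?case using 3 k by simp
qed

lemma phi_len: "length (phi_rev r) = length r"
  by (induction r rule: phi_rev.induct) (auto simp: Let_def)

lemma phi_bound: "v \<in> set (phi_rev r) \<Longrightarrow> v \<le> length r"
proof (induction r arbitrary: v rule: phi_rev.induct)
  case 1 then show ?case by simp
next
  case (2 rs) then show ?case by fastforce
next
  case (3 k rs)
  then show ?case by (force simp: Let_def dest: in_set_takeD in_set_dropD)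
qed

abbreviation "lr \<equiv> last_ascending_run_length"

lemma lr_props: "lr xs \<le> length xs \<and> sorted_wrt (<) (drop (length xs - lr xs) xs)"
  unfolding last_ascending_run_length_def
  by (rule GreatestI_nat[where k=0 and b="length xs"]) auto

lemma lr_max: "j \<le> length xs \<Longrightarrow> sorted_wrt (<) (drop (length xs - j) xs) \<Longrightarrow> j \<le> lr xs"
  unfolding last_ascending_run_length_def
  by (rule Greatest_le_nat[where b="length xs"]) auto

lemma lr_sorted: "j \<le> lr xs \<Longrightarrow> sorted_wrt (<) (drop (length xs - j) xs)"
proof -
  assume j: "j \<le> lr xs"
  have "drop (length xs - j) xs = drop (lr xs - j) (drop (length xs - lr xs) xs)"
    using j lr_props[of xs] by simp
  then show ?thesis using lr_props[of xs] sorted_wrt_drop by metis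
qed

lemma lr_eqI: "k \<le> length xs \<Longrightarrow> sorted_wrt (<) (drop (length xs - k) xs)
  \<Longrightarrow> (\<And>j. k < j \<Longrightarrow> j \<le> length xs \<Longrightarrow> \<not> sorted_wrt (<) (drop (length xs - j) xs))
  \<Longrightarrow> lr xs = k"
  by (metis lr_max lr_props le_antisym not_le)

lemma lr_snoc: assumes "\<forall>u\<in>set xs. u < v" shows "lr (xs @ [v]) = Suc (lr xs)"
proof (rule lr_eqI)
  show "Suc (lr xs) \<le> length (xs @ [v])" using lr_props[of xs] by simp
  have "drop (length (xs @ [v]) - Suc (lr xs)) (xs @ [v]) = drop (length xs - lr xs) xs @ [v]"
    using lr_props[of xs] by simp
  then show "sorted_wrt (<) (drop (length (xs @ [v]) - Suc (lr xs)) (xs @ [v]))"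
    using lr_props[of xs] assms by (auto simp: sorted_wrt_append dest: in_set_dropD)
next
  fix j assume j: "Suc (lr xs) < j" "j \<le> length (xs @ [v])"
  show "\<not> sorted_wrt (<) (drop (length (xs @ [v]) - j) (xs @ [v]))"
  proof
    assume s: "sorted_wrt (<) (drop (length (xs @ [v]) - j) (xs @ [v]))"
    have "drop (length (xs @ [v]) - j) (xs @ [v]) = drop (length xs - (j-1)) xs @ [v]"
      using j by simp
    then have "sorted_wrt (<) (drop (length xs - (j-1)) xs)" using s by (simp add: sorted_wrt_append)
    then have "j - 1 \<le> lr xs" using lr_max j by simp
    then show False using j by simp
  qed
qed

lemma lr_ins:
  assumes k: "1 \<le> k" "k \<le> length p" "k \<le> lr p" and bd: "\<forall>u\<in>set p. u < v"
  shows "lr (take (length p - k) p @ [v] @ drop (length p - k) p) = k"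
proof (rule lr_eqI)
  let ?ys = "take (length p - k) p @ [v] @ drop (length p - k) p"
  have len: "length ?ys = Suc (length p)" using k by simp
  show "k \<le> length ?ys" using len k by simp
  have "drop (length ?ys - k) ?ys = drop (length p - k) p"
    using k len by (simp add: Suc_diff_le)
  then show "sorted_wrt (<) (drop (length ?ys - k) ?ys)" using lr_sorted[OF k(3)] by simp
next
  let ?ys = "take (length p - k) p @ [v] @ drop (length p - k) p"
  fix j assume j: "k < j" "j \<le> length ?ys"
  have "drop (length ?ys - j) ?ys = drop (length p - (j - 1)) (take (length p - k) p) @ [v] @ drop (length p - k) p"
    using j k by (simp add: Suc_diff_le)
  moreover have "drop (length p - k) p \<noteq> []" using k by simp
  then obtain u where u1: "u \<in> set (drop (length p - k) p)" by (metis list.set_sel(1))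
  then have u2: "u < v" using bd by (auto dest: in_set_dropD)
  ultimately show "\<not> sorted_wrt (<) (drop (length ?ys - j) ?ys)"
    using u1 u2 by (simp add: sorted_wrt_append) (metis u1 u2 less_asym)
qed

lemma main: "vr r \<Longrightarrow> good r \<Longrightarrow> lr (phi_rev r) = colsize r"
proof (induction r rule: phi_rev.induct)
  case 1 then show ?case
    unfolding last_ascending_run_length_def by (auto intro: Greatest_equality)
next
  case (2 rs)
  have "\<forall>u\<in>set (phi_rev rs). u < Suc (length rs)" using phi_bound by fastforce
  then show ?case using 2 lr_snoc by simp
next
  case (3 k rs)
  have b: "\<forall>u\<in>set (phi_rev rs). u < Suc (length rs)" using phi_bound by fastforce
  have "lr (phi_rev rs) = colsize rs" using 3 by simp
  then show ?case using 3(2,3) lr_ins[of k "phi_rev rs" "Suc (length rs)"] b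
    by (simp add: Let_def phi_len)
qed

lemma valid_vr: "(\<forall>j < length s. \<forall>k. s ! j = Paste k \<longrightarrow> 1 \<le> k \<and> k \<le> j) \<Longrightarrow> vr (rev s)"
proof (induction s rule: rev_induct)
  case Nil then show ?case by simp
next
  case (snoc x xs)
  have "\<forall>j < length xs. \<forall>k. xs ! j = Paste k \<longrightarrow> 1 \<le> k \<and> k \<le> j"
    using snoc(2) by (metis length_append_singleton less_SucI nth_append)
  then have "vr (rev xs)" using snoc by blast
  moreover have "\<forall>k. x = Paste k \<longrightarrow> 1 \<le> k \<and> k \<le> length xs"
    using snoc(2) by (metis length_append_singleton lessI nth_append_length)
  ultimately show ?case by (cases x) auto
qed

lemma fin_build: "finite (build_rev r)"
proof (induction r rule: build_rev.induct)
  case (3 k rs)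
  have "{(0::int, int y) | y. y < k} = (\<lambda>y. (0, int y)) ` {..<k}" by auto
  then show ?case using 3 by (simp add: build_rev.simps)
qed (simp_all add: build_rev.simps)

theorem mainTheorem2:
  fixes s :: "deco_step list"
  assumes "valid_steps s"
    and "parallelogram_polyomino (deco_poly s)"
  shows "first_column_size (deco_poly s) = last_ascending_run_length (Phi4_inv s)"
proof -
  let ?r = "rev s"
  have v: "vr ?r" using assms(1) valid_vr unfolding valid_steps_def by blast
  have ne: "?r \<noteq> []" using assms(1) unfolding valid_steps_def by simp
  have g: "good ?r" using Q_good[OF v] para_Q assms(2) unfolding deco_poly_def by blast
  let ?P = "build_rev ?r"
  have "(0,0) \<in> ?P" using colsize_pos[OF v ne] col0 by simp
  then have m: "Min (fst ` ?P) = 0"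
  proof -
    have fin: "finite (fst ` ?P)"
    proof -
      have "finite ?P" by (rule fin_build)
      then show ?thesis by simp
    qed
    show ?thesis using \<open>(0,0) \<in> ?P\<close> fin nonneg
      by (intro Min_eqI) force+
  qed
  have "{c \<in> ?P. fst c = 0} = (\<lambda>y. (0::int, int y)) ` {..<colsize ?r}"
  proof (intro set_eqI iffI)
    fix c assume "c \<in> {c \<in> ?P. fst c = 0}"
    then obtain y where "c = (0,y)" "(0,y) \<in> ?P" by (cases c) auto
    then show "c \<in> (\<lambda>y. (0::int, int y)) ` {..<colsize ?r}" using col0
      by (auto intro!: image_eqI[of _ _ "nat y"])
  next
    fix c assume "c \<in> (\<lambda>y. (0::int, int y)) ` {..<colsize ?r}"
    then show "c \<in> {c \<in> ?P. fst c = 0}" using col0 by auto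
  qed
  then have "first_column_size (deco_poly s) = colsize ?r"
    unfolding first_column_size_def deco_poly_def m
    by (simp add: card_image inj_on_def)
  then show ?thesis using main[OF v g] unfolding Phi4_inv_def by simp
qed

end
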